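(* Every lens that is both an epimorphism and a monomorphism in $\mathbf{Lens}$ is an isomorphism in $\mathbf{Lens}$.
   Context: A lens $F\colon \mathbf{A}\to\mathbf{B}$ between small categories consists of a functor $F\colon\mathbf{A}\to\mathbf{B}$ (the get functor) together with, for each object $A$ of $\mathbf{A}$, a function $\varphi_{F,A}$ from the set of morphisms of $\mathbf{B}$ with domain $FA$ to the set of morphisms of $\mathbf{A}$ with domain $A$, such that: $F(\varphi_{F,A}b)=b$; $\varphi_{F,A}(\mathrm{id}_{FA})=\mathrm{id}_A$; and $\varphi_{F,A}(b'\circ b)=\varphi_{F,A'}(b')\circ\varphi_{F,A}(b)$ whenever $b$ has domain $FA$, $A'$ is the codomain of $\varphi_{F,A}b$, and $b'$ has domain $FA'$. $\mathbf{Lens}$ is the category of small categories and lenses, with composite of $F\colon\mathbf{A}\to\mathbf{B}$, $G\colon\mathbf{B}\to\mathbf{C}$ having get functor $G\circ F$ and puts $\varphi_{G\circ F,A}(c)=\varphi_{F,A}(\varphi_{G,FA}(c))$. *)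

theory Defs
  imports Main
begin

record ('o, 'm) cat =
  cat_obj  :: "'o set"
  cat_mor  :: "'m set"
  cat_dom  :: "'m \<Rightarrow> 'o"
  cat_cod  :: "'m \<Rightarrow> 'o"
  cat_id   :: "'o \<Rightarrow> 'm"
  cat_comp :: "'m \<Rightarrow> 'm \<Rightarrow> 'm"   (* cat_comp C g f = g o f *)

definition category :: "('o, 'm) cat \<Rightarrow> bool" where
  "category C \<longleftrightarrow>
     (\<forall>f\<in>cat_mor C. cat_dom C f \<in> cat_obj C \<and> cat_cod C f \<in> cat_obj C) \<and>
     (\<forall>x\<in>cat_obj C. cat_id C x \<in> cat_mor C \<and> cat_dom C (cat_id C x) = x \<and> cat_cod C (cat_id C x) = x) \<and>
     (\<forall>f\<in>cat_mor C. \<forall>g\<in>cat_mor C. cat_cod C f = cat_dom C g \<longrightarrow>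
        cat_comp C g f \<in> cat_mor C \<and> cat_dom C (cat_comp C g f) = cat_dom C f \<and>
        cat_cod C (cat_comp C g f) = cat_cod C g) \<and>
     (\<forall>f\<in>cat_mor C. cat_comp C (cat_id C (cat_cod C f)) f = f \<and> cat_comp C f (cat_id C (cat_dom C f)) = f) \<and>
     (\<forall>f\<in>cat_mor C. \<forall>g\<in>cat_mor C. \<forall>h\<in>cat_mor C. cat_cod C f = cat_dom C g \<longrightarrow> cat_cod C g = cat_dom C h \<longrightarrow>
        cat_comp C h (cat_comp C g f) = cat_comp C (cat_comp C h g) f)"

record ('ao, 'am, 'bo, 'bm) lens =
  get_obj :: "'ao \<Rightarrow> 'bo"
  get_mor :: "'am \<Rightarrow> 'bm"
  put     :: "'ao \<Rightarrow> 'bm \<Rightarrow> 'am"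

definition is_functor :: "('ao, 'am) cat \<Rightarrow> ('bo, 'bm) cat \<Rightarrow> ('ao, 'am, 'bo, 'bm) lens \<Rightarrow> bool" where
  "is_functor A B F \<longleftrightarrow>
     (\<forall>x\<in>cat_obj A. get_obj F x \<in> cat_obj B) \<and>
     (\<forall>f\<in>cat_mor A. get_mor F f \<in> cat_mor B \<and>
        cat_dom B (get_mor F f) = get_obj F (cat_dom A f) \<and>
        cat_cod B (get_mor F f) = get_obj F (cat_cod A f)) \<and>
     (\<forall>x\<in>cat_obj A. get_mor F (cat_id A x) = cat_id B (get_obj F x)) \<and>
     (\<forall>f\<in>cat_mor A. \<forall>g\<in>cat_mor A. cat_cod A f = cat_dom A g \<longrightarrow>
        get_mor F (cat_comp A g f) = cat_comp B (get_mor F g) (get_mor F f))"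

definition is_lens :: "('ao, 'am) cat \<Rightarrow> ('bo, 'bm) cat \<Rightarrow> ('ao, 'am, 'bo, 'bm) lens \<Rightarrow> bool" where
  "is_lens A B F \<longleftrightarrow> category A \<and> category B \<and> is_functor A B F \<and>
     (\<forall>x\<in>cat_obj A. \<forall>b\<in>cat_mor B. cat_dom B b = get_obj F x \<longrightarrow>
        put F x b \<in> cat_mor A \<and> cat_dom A (put F x b) = x \<and> get_mor F (put F x b) = b) \<and>
     (\<forall>x\<in>cat_obj A. put F x (cat_id B (get_obj F x)) = cat_id A x) \<and>
     (\<forall>x\<in>cat_obj A. \<forall>b\<in>cat_mor B. \<forall>b'\<in>cat_mor B.
        cat_dom B b = get_obj F x \<longrightarrow> cat_dom B b' = get_obj F (cat_cod A (put F x b)) \<longrightarrow>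
        put F x (cat_comp B b' b) = cat_comp A (put F (cat_cod A (put F x b)) b') (put F x b))"

definition lens_comp :: "('bo, 'bm, 'co, 'cm) lens \<Rightarrow> ('ao, 'am, 'bo, 'bm) lens \<Rightarrow> ('ao, 'am, 'co, 'cm) lens" where
  "lens_comp G F = \<lparr> get_obj = get_obj G \<circ> get_obj F, get_mor = get_mor G \<circ> get_mor F,
                     put = (\<lambda>x c. put F x (put G (get_obj F x) c)) \<rparr>"

definition id_lens :: "('o, 'm, 'o, 'm) lens" where
  "id_lens = \<lparr> get_obj = (\<lambda>x. x), get_mor = (\<lambda>f. f), put = (\<lambda>x b. b) \<rparr>"

text \<open>Equality of lenses A -> B (as morphisms of Lens): agreement on the carriers.\<close>

definition lens_eq :: "('ao, 'am) cat \<Rightarrow> ('bo, 'bm) cat \<Rightarrow> ('ao, 'am, 'bo, 'bm) lens \<Rightarrow> ('ao, 'am, 'bo, 'bm) lens \<Rightarrow> bool" where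
  "lens_eq A B F G \<longleftrightarrow>
     (\<forall>x\<in>cat_obj A. get_obj F x = get_obj G x) \<and>
     (\<forall>f\<in>cat_mor A. get_mor F f = get_mor G f) \<and>
     (\<forall>x\<in>cat_obj A. \<forall>b\<in>cat_mor B. cat_dom B b = get_obj F x \<longrightarrow> put F x b = put G x b)"

text \<open>Test categories range over a fixed universe type, large relative to A and B
  (HOL cannot quantify over types inside a formula).\<close>

type_synonym ('ao, 'am, 'bo, 'bm) univ = "(nat + 'ao + 'am + 'bo + 'bm) list set"

definition lens_epi :: "('ao, 'am) cat \<Rightarrow> ('bo, 'bm) cat \<Rightarrow> ('ao, 'am, 'bo, 'bm) lens \<Rightarrow> bool" where
  "lens_epi A B F \<longleftrightarrow> is_lens A B F \<and>
     (\<forall>(C :: (('ao, 'am, 'bo, 'bm) univ, ('ao, 'am, 'bo, 'bm) univ) cat) G H.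
        is_lens B C G \<longrightarrow> is_lens B C H \<longrightarrow>
        lens_eq A C (lens_comp G F) (lens_comp H F) \<longrightarrow> lens_eq B C G H)"

definition lens_mono :: "('ao, 'am) cat \<Rightarrow> ('bo, 'bm) cat \<Rightarrow> ('ao, 'am, 'bo, 'bm) lens \<Rightarrow> bool" where
  "lens_mono A B F \<longleftrightarrow> is_lens A B F \<and>
     (\<forall>(X :: (('ao, 'am, 'bo, 'bm) univ, ('ao, 'am, 'bo, 'bm) univ) cat) G H.
        is_lens X A G \<longrightarrow> is_lens X A H \<longrightarrow>
        lens_eq X B (lens_comp F G) (lens_comp F H) \<longrightarrow> lens_eq X A G H)"

definition lens_iso :: "('ao, 'am) cat \<Rightarrow> ('bo, 'bm) cat \<Rightarrow> ('ao, 'am, 'bo, 'bm) lens \<Rightarrow> bool" where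
  "lens_iso A B F \<longleftrightarrow> is_lens A B F \<and>
     (\<exists>G. is_lens B A G \<and> lens_eq A A (lens_comp G F) id_lens \<and> lens_eq B B (lens_comp F G) id_lens)"

end

theory Submission
  imports Defs
begin

definition tcat :: "('o \<Rightarrow> 'u) \<Rightarrow> ('m \<Rightarrow> 'v) \<Rightarrow> ('o, 'm) cat \<Rightarrow> ('u, 'v) cat" where
  "tcat eo em D = \<lparr> cat_obj = eo ` cat_obj D, cat_mor = em ` cat_mor D,
     cat_dom = (\<lambda>g. eo (cat_dom D (inv em g))), cat_cod = (\<lambda>g. eo (cat_cod D (inv em g))),
     cat_id = (\<lambda>x. em (cat_id D (inv eo x))),
     cat_comp = (\<lambda>g f. em (cat_comp D (inv em g) (inv em f))) \<rparr>"

lemma category_tcat: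
  assumes "inj eo" "inj em" "category D"
  shows "category (tcat eo em D)"
  using assms unfolding category_def tcat_def
  by (simp add: inv_f_f inj_eq)

definition tsrc :: "('o \<Rightarrow> 'u) \<Rightarrow> ('m \<Rightarrow> 'v) \<Rightarrow> ('o, 'm, 'ao, 'am) lens \<Rightarrow> ('u, 'v, 'ao, 'am) lens" where
  "tsrc eo em L = \<lparr> get_obj = get_obj L \<circ> inv eo, get_mor = get_mor L \<circ> inv em,
     put = (\<lambda>x a. em (put L (inv eo x) a)) \<rparr>"

definition ttgt :: "('o \<Rightarrow> 'u) \<Rightarrow> ('m \<Rightarrow> 'v) \<Rightarrow> ('bo, 'bm, 'o, 'm) lens \<Rightarrow> ('bo, 'bm, 'u, 'v) lens" where
  "ttgt eo em L = \<lparr> get_obj = eo \<circ> get_obj L, get_mor = em \<circ> get_mor L,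
     put = (\<lambda>y c. put L y (inv em c)) \<rparr>"

lemma lens_tsrc:
  assumes "inj eo" "inj em" "is_lens D A L"
  shows "is_lens (tcat eo em D) A (tsrc eo em L)"
  using assms category_tcat[OF assms(1,2)] unfolding is_lens_def is_functor_def tcat_def tsrc_def
  by (simp add: inv_f_f inj_eq)

lemma lens_ttgt:
  assumes "inj eo" "inj em" "is_lens B D L"
  shows "is_lens B (tcat eo em D) (ttgt eo em L)"
  using assms category_tcat[OF assms(1,2)] unfolding is_lens_def is_functor_def tcat_def ttgt_def
  by (auto simp add: inv_f_f inj_eq)

definition Pcat :: "('ao, 'am) cat \<Rightarrow> ('ao, 'am, 'bo, 'bm) lens \<Rightarrow> ('ao \<times> 'ao, 'am \<times> 'am) cat" where
  "Pcat A F = \<lparr> cat_obj = {p. fst p \<in> cat_obj A \<and> snd p \<in> cat_obj A \<and> get_obj F (fst p) = get_obj F (snd p)},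
     cat_mor = {p. fst p \<in> cat_mor A \<and> snd p \<in> cat_mor A \<and> get_mor F (fst p) = get_mor F (snd p)},
     cat_dom = map_prod (cat_dom A) (cat_dom A), cat_cod = map_prod (cat_cod A) (cat_cod A),
     cat_id = map_prod (cat_id A) (cat_id A),
     cat_comp = (\<lambda>g f. (cat_comp A (fst g) (fst f), cat_comp A (snd g) (snd f))) \<rparr>"

definition pi1 :: "('ao, 'am, 'bo, 'bm) lens \<Rightarrow> ('ao \<times> 'ao, 'am \<times> 'am, 'ao, 'am) lens" where
  "pi1 F = \<lparr> get_obj = fst, get_mor = fst, put = (\<lambda>p f. (f, put F (snd p) (get_mor F f))) \<rparr>"

definition pi2 :: "('ao, 'am, 'bo, 'bm) lens \<Rightarrow> ('ao \<times> 'ao, 'am \<times> 'am, 'ao, 'am) lens" where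
  "pi2 F = \<lparr> get_obj = snd, get_mor = snd, put = (\<lambda>p f. (put F (fst p) (get_mor F f), f)) \<rparr>"

lemma Pcat_category:
  assumes "is_lens A B F"
  shows "category (Pcat A F)"
proof -
  have cA: "category A" and fF: "is_functor A B F" using assms by (auto simp: is_lens_def)
  show ?thesis using cA fF unfolding category_def Pcat_def is_functor_def
    by (auto simp: map_prod_def split_beta) (metis)+
qed

lemma lensD:
  assumes "is_lens A B F"
  shows "category A" "category B"
    "\<And>x. x \<in> cat_obj A \<Longrightarrow> get_obj F x \<in> cat_obj B"
    "\<And>f. f \<in> cat_mor A \<Longrightarrow> get_mor F f \<in> cat_mor B"
    "\<And>f. f \<in> cat_mor A \<Longrightarrow> cat_dom B (get_mor F f) = get_obj F (cat_dom A f)"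
    "\<And>f. f \<in> cat_mor A \<Longrightarrow> cat_cod B (get_mor F f) = get_obj F (cat_cod A f)"
    "\<And>x. x \<in> cat_obj A \<Longrightarrow> get_mor F (cat_id A x) = cat_id B (get_obj F x)"
    "\<And>f g. f \<in> cat_mor A \<Longrightarrow> g \<in> cat_mor A \<Longrightarrow> cat_cod A f = cat_dom A g \<Longrightarrow>
        get_mor F (cat_comp A g f) = cat_comp B (get_mor F g) (get_mor F f)"
    "\<And>x b. x \<in> cat_obj A \<Longrightarrow> b \<in> cat_mor B \<Longrightarrow> cat_dom B b = get_obj F x \<Longrightarrow> put F x b \<in> cat_mor A"
    "\<And>x b. x \<in> cat_obj A \<Longrightarrow> b \<in> cat_mor B \<Longrightarrow> cat_dom B b = get_obj F x \<Longrightarrow> cat_dom A (put F x b) = x"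
    "\<And>x b. x \<in> cat_obj A \<Longrightarrow> b \<in> cat_mor B \<Longrightarrow> cat_dom B b = get_obj F x \<Longrightarrow> get_mor F (put F x b) = b"
    "\<And>x. x \<in> cat_obj A \<Longrightarrow> put F x (cat_id B (get_obj F x)) = cat_id A x"
    "\<And>x b b'. x \<in> cat_obj A \<Longrightarrow> b \<in> cat_mor B \<Longrightarrow> b' \<in> cat_mor B \<Longrightarrow>
        cat_dom B b = get_obj F x \<Longrightarrow> cat_dom B b' = get_obj F (cat_cod A (put F x b)) \<Longrightarrow>
        put F x (cat_comp B b' b) = cat_comp A (put F (cat_cod A (put F x b)) b') (put F x b)"
  using assms unfolding is_lens_def is_functor_def by blast+

lemma lens_cod_put:
  assumes "is_lens A B F" "x \<in> cat_obj A" "b \<in> cat_mor B" "cat_dom B b = get_obj F x"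
  shows "get_obj F (cat_cod A (put F x b)) = cat_cod B b" "cat_cod A (put F x b) \<in> cat_obj A"
proof -
  note L = lensD[OF assms(1)]
  have p: "put F x b \<in> cat_mor A" using L(9) assms by blast
  show "get_obj F (cat_cod A (put F x b)) = cat_cod B b" using L(6)[OF p] L(11) assms by metis
  show "cat_cod A (put F x b) \<in> cat_obj A" using L(1) p unfolding category_def by blast
qed

lemma catD:
  assumes "category A"
  shows "\<And>f. f \<in> cat_mor A \<Longrightarrow> cat_dom A f \<in> cat_obj A"
    "\<And>f. f \<in> cat_mor A \<Longrightarrow> cat_cod A f \<in> cat_obj A"
    "\<And>x. x \<in> cat_obj A \<Longrightarrow> cat_id A x \<in> cat_mor A"
    "\<And>x. x \<in> cat_obj A \<Longrightarrow> cat_dom A (cat_id A x) = x"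
    "\<And>x. x \<in> cat_obj A \<Longrightarrow> cat_cod A (cat_id A x) = x"
    "\<And>f g. f \<in> cat_mor A \<Longrightarrow> g \<in> cat_mor A \<Longrightarrow> cat_cod A f = cat_dom A g \<Longrightarrow> cat_comp A g f \<in> cat_mor A"
    "\<And>f g. f \<in> cat_mor A \<Longrightarrow> g \<in> cat_mor A \<Longrightarrow> cat_cod A f = cat_dom A g \<Longrightarrow> cat_dom A (cat_comp A g f) = cat_dom A f"
    "\<And>f g. f \<in> cat_mor A \<Longrightarrow> g \<in> cat_mor A \<Longrightarrow> cat_cod A f = cat_dom A g \<Longrightarrow> cat_cod A (cat_comp A g f) = cat_cod A g"
    "\<And>f. f \<in> cat_mor A \<Longrightarrow> cat_comp A (cat_id A (cat_cod A f)) f = f"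
    "\<And>f. f \<in> cat_mor A \<Longrightarrow> cat_comp A f (cat_id A (cat_dom A f)) = f"
    "\<And>f g h. f \<in> cat_mor A \<Longrightarrow> g \<in> cat_mor A \<Longrightarrow> h \<in> cat_mor A \<Longrightarrow> cat_cod A f = cat_dom A g \<Longrightarrow> cat_cod A g = cat_dom A h \<Longrightarrow>
        cat_comp A h (cat_comp A g f) = cat_comp A (cat_comp A h g) f"
  using assms unfolding category_def by blast+

lemma put_get_comp:
  assumes "is_lens A B F" "b \<in> cat_obj A"
        "f \<in> cat_mor A" "get_obj F (cat_dom A f) = get_obj F b" "g \<in> cat_mor A" "cat_dom A g = cat_cod A f"
  shows "put F b (get_mor F (cat_comp A g f)) =
         cat_comp A (put F (cat_cod A (put F b (get_mor F f))) (get_mor F g)) (put F b (get_mor F f))"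
proof -
  note L = lensD[OF assms(1)]
  note a = assms(2-)
      have "get_mor F f \<in> cat_mor B" "cat_dom B (get_mor F f) = get_obj F b" using L a by auto
      moreover have "get_mor F g \<in> cat_mor B" using L a by auto
      moreover have "cat_dom B (get_mor F g) = get_obj F (cat_cod A (put F b (get_mor F f)))"
        using L a lens_cod_put[OF assms(1), of b "get_mor F f"] by (metis calculation(1,2))
      ultimately show ?thesis
        using L(8)[of f g] L(13)[of b "get_mor F f" "get_mor F g"] a by simp
qed

lemma pi1_lens:
  assumes "is_lens A B F"
  shows "is_lens (Pcat A F) A (pi1 F)"
proof -
  have cA: "category A" and fF: "is_functor A B F" and cB: "category B" using assms by (auto simp: is_lens_def)
  show ?thesis using Pcat_category[OF assms] cA cB fF assms unfolding is_lens_def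
    apply (intro conjI)
    apply simp apply simp
    subgoal unfolding is_functor_def Pcat_def pi1_def by auto
    subgoal unfolding is_functor_def Pcat_def pi1_def by auto
    subgoal unfolding is_functor_def Pcat_def pi1_def by auto
    subgoal unfolding Pcat_def pi1_def using put_get_comp[OF assms] by auto
    done
qed

lemma pi2_lens:
  assumes "is_lens A B F"
  shows "is_lens (Pcat A F) A (pi2 F)"
proof -
  have cA: "category A" and fF: "is_functor A B F" and cB: "category B" using assms by (auto simp: is_lens_def)
  show ?thesis using Pcat_category[OF assms] cA cB fF assms unfolding is_lens_def
    apply (intro conjI)
    apply simp apply simp
    subgoal unfolding is_functor_def Pcat_def pi2_def by auto
    subgoal unfolding is_functor_def Pcat_def pi2_def by auto
    subgoal unfolding is_functor_def Pcat_def pi2_def by auto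
    subgoal unfolding Pcat_def pi2_def using put_get_comp[OF assms] by auto
    done
qed

definition Ccat :: "('bo, 'bm) cat \<Rightarrow> 'bo set \<Rightarrow> (bool \<times> 'bo, bool \<times> 'bm) cat" where
  "Ccat B I = \<lparr> cat_obj = {p. snd p \<in> cat_obj B \<and> (snd p \<in> I \<longrightarrow> \<not> fst p)},
     cat_mor = {p. snd p \<in> cat_mor B \<and> (cat_dom B (snd p) \<in> I \<longrightarrow> \<not> fst p)},
     cat_dom = (\<lambda>p. (fst p, cat_dom B (snd p))),
     cat_cod = (\<lambda>p. (fst p \<and> cat_cod B (snd p) \<notin> I, cat_cod B (snd p))),
     cat_id = (\<lambda>p. (fst p, cat_id B (snd p))),
     cat_comp = (\<lambda>g f. (fst f, cat_comp B (snd g) (snd f))) \<rparr>"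

definition Gk :: "bool \<Rightarrow> 'bo set \<Rightarrow> ('bo, 'bm) cat \<Rightarrow> ('bo, 'bm, bool \<times> 'bo, bool \<times> 'bm) lens" where
  "Gk k I B = \<lparr> get_obj = (\<lambda>y. (k \<and> y \<notin> I, y)), get_mor = (\<lambda>b. (k \<and> cat_dom B b \<notin> I, b)),
     put = (\<lambda>y c. snd c) \<rparr>"

lemma Ccat_category:
  assumes "category B" and fc: "\<And>b. b \<in> cat_mor B \<Longrightarrow> cat_dom B b \<in> I \<Longrightarrow> cat_cod B b \<in> I"
  shows "category (Ccat B I)"
proof -
  note C = catD[OF assms(1)]
  show ?thesis unfolding category_def Ccat_def
    using C fc by (auto simp: split_beta)
qed

lemma Gk_lens:
  assumes "category B" and fc: "\<And>b. b \<in> cat_mor B \<Longrightarrow> cat_dom B b \<in> I \<Longrightarrow> cat_cod B b \<in> I"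
  shows "is_lens B (Ccat B I) (Gk k I B)"
proof -
  note C = catD[OF assms(1)]
  show ?thesis unfolding is_lens_def
    apply (intro conjI)
    apply (fact assms(1))
    subgoal using Ccat_category[OF assms(1)] fc by blast
    subgoal unfolding is_functor_def Ccat_def Gk_def
      apply (intro conjI)
      subgoal using C fc by auto
      subgoal using C fc by auto
      subgoal using C fc by auto
      subgoal using C fc by auto
      done
    subgoal unfolding Ccat_def Gk_def using C fc by auto
    subgoal unfolding Ccat_def Gk_def using C fc by auto
    subgoal unfolding Ccat_def Gk_def using C fc by auto
    done
qed

definition eoP :: "'ao \<times> 'ao \<Rightarrow> (nat + 'ao + 'am + 'bo + 'bm) list set" where
  "eoP p = {[Inr (Inl (fst p)), Inr (Inl (snd p))]}"
definition emP :: "'am \<times> 'am \<Rightarrow> (nat + 'ao + 'am + 'bo + 'bm) list set" where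
  "emP p = {[Inr (Inr (Inl (fst p))), Inr (Inr (Inl (snd p)))]}"
definition eoC :: "bool \<times> 'bo \<Rightarrow> (nat + 'ao + 'am + 'bo + 'bm) list set" where
  "eoC p = {[Inl (if fst p then 1 else 0), Inr (Inr (Inr (Inl (snd p))))]}"
definition emC :: "bool \<times> 'bm \<Rightarrow> (nat + 'ao + 'am + 'bo + 'bm) list set" where
  "emC p = {[Inl (if fst p then 1 else 0), Inr (Inr (Inr (Inr (snd p))))]}"

lemma inj_eoP: "inj eoP" by (rule injI) (auto simp: eoP_def prod_eq_iff)
lemma inj_emP: "inj emP" by (rule injI) (auto simp: emP_def prod_eq_iff)
lemma inj_eoC: "inj eoC" by (rule injI) (auto simp: eoC_def prod_eq_iff split: if_splits)
lemma inj_emC: "inj emC" by (rule injI) (auto simp: emC_def prod_eq_iff split: if_splits)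

lemma mono_inj:
  fixes A :: "('ao, 'am) cat" and B :: "('bo, 'bm) cat" and F :: "('ao, 'am, 'bo, 'bm) lens"
  assumes "lens_mono A B F"
  shows "\<And>x1 x2. x1 \<in> cat_obj A \<Longrightarrow> x2 \<in> cat_obj A \<Longrightarrow> get_obj F x1 = get_obj F x2 \<Longrightarrow> x1 = x2"
    "\<And>f1 f2. f1 \<in> cat_mor A \<Longrightarrow> f2 \<in> cat_mor A \<Longrightarrow> get_mor F f1 = get_mor F f2 \<Longrightarrow> f1 = f2"
proof -
  have L: "is_lens A B F" using assms by (simp add: lens_mono_def)
  note LD = lensD[OF L]
  let ?X = "tcat (eoP :: 'ao \<times> 'ao \<Rightarrow> ('ao,'am,'bo,'bm) univ) (emP :: 'am \<times> 'am \<Rightarrow> ('ao,'am,'bo,'bm) univ) (Pcat A F)"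
  let ?G = "tsrc (eoP :: 'ao \<times> 'ao \<Rightarrow> ('ao,'am,'bo,'bm) univ) (emP :: 'am \<times> 'am \<Rightarrow> ('ao,'am,'bo,'bm) univ) (pi1 F)"
  let ?H = "tsrc (eoP :: 'ao \<times> 'ao \<Rightarrow> ('ao,'am,'bo,'bm) univ) (emP :: 'am \<times> 'am \<Rightarrow> ('ao,'am,'bo,'bm) univ) (pi2 F)"
  have G: "is_lens ?X A ?G" by (rule lens_tsrc[OF inj_eoP inj_emP pi1_lens[OF L]])
  have H: "is_lens ?X A ?H" by (rule lens_tsrc[OF inj_eoP inj_emP pi2_lens[OF L]])
  have E: "lens_eq ?X B (lens_comp F ?G) (lens_comp F ?H)"
    unfolding lens_eq_def lens_comp_def tsrc_def tcat_def pi1_def pi2_def Pcat_def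
    using LD by (auto simp: inv_f_f[OF inj_eoP] inv_f_f[OF inj_emP])
  have "lens_eq ?X A ?G ?H" using assms G H E unfolding lens_mono_def by blast
  hence E2: "\<forall>x\<in>cat_obj (Pcat A F). fst x = snd x" "\<forall>f\<in>cat_mor (Pcat A F). fst f = snd f"
    unfolding lens_eq_def tsrc_def tcat_def pi1_def pi2_def
    by (auto simp: inv_f_f[OF inj_eoP] inv_f_f[OF inj_emP])
  show "\<And>x1 x2. x1 \<in> cat_obj A \<Longrightarrow> x2 \<in> cat_obj A \<Longrightarrow> get_obj F x1 = get_obj F x2 \<Longrightarrow> x1 = x2"
    using E2(1) unfolding Pcat_def by auto
  show "\<And>f1 f2. f1 \<in> cat_mor A \<Longrightarrow> f2 \<in> cat_mor A \<Longrightarrow> get_mor F f1 = get_mor F f2 \<Longrightarrow> f1 = f2"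
    using E2(2) unfolding Pcat_def by auto
qed

lemma epi_surj:
  fixes A :: "('ao, 'am) cat" and B :: "('bo, 'bm) cat" and F :: "('ao, 'am, 'bo, 'bm) lens"
  assumes "lens_epi A B F" "y \<in> cat_obj B"
  shows "\<exists>x\<in>cat_obj A. get_obj F x = y"
proof -
  have L: "is_lens A B F" using assms by (simp add: lens_epi_def)
  note LD = lensD[OF L]
  define I where "I = get_obj F ` cat_obj A"
  have fc: "\<And>b. b \<in> cat_mor B \<Longrightarrow> cat_dom B b \<in> I \<Longrightarrow> cat_cod B b \<in> I"
  proof -
    fix b assume b: "b \<in> cat_mor B" "cat_dom B b \<in> I"
    then obtain x where x: "x \<in> cat_obj A" "cat_dom B b = get_obj F x" unfolding I_def by auto
    show "cat_cod B b \<in> I" using lens_cod_put[OF L x(1) b(1) x(2)] unfolding I_def by (metis image_eqI)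
  qed
  let ?C = "tcat (eoC :: bool \<times> 'bo \<Rightarrow> ('ao,'am,'bo,'bm) univ) (emC :: bool \<times> 'bm \<Rightarrow> ('ao,'am,'bo,'bm) univ) (Ccat B I)"
  let ?G = "ttgt (eoC :: bool \<times> 'bo \<Rightarrow> ('ao,'am,'bo,'bm) univ) (emC :: bool \<times> 'bm \<Rightarrow> ('ao,'am,'bo,'bm) univ) (Gk False I B)"
  let ?H = "ttgt (eoC :: bool \<times> 'bo \<Rightarrow> ('ao,'am,'bo,'bm) univ) (emC :: bool \<times> 'bm \<Rightarrow> ('ao,'am,'bo,'bm) univ) (Gk True I B)"
  have G: "is_lens B ?C ?G" by (rule lens_ttgt[OF inj_eoC inj_emC Gk_lens[OF LD(2) fc]])
  have H: "is_lens B ?C ?H" by (rule lens_ttgt[OF inj_eoC inj_emC Gk_lens[OF LD(2) fc]])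
  have cA: "category A" by (rule LD(1))
  have E: "lens_eq A ?C (lens_comp ?G F) (lens_comp ?H F)"
    unfolding lens_eq_def lens_comp_def ttgt_def Gk_def
    using LD catD[OF cA] by (auto simp: I_def)
  have "lens_eq B ?C ?G ?H" using assms G H E unfolding lens_epi_def by blast
  hence "y \<in> I" using assms(2) unfolding lens_eq_def ttgt_def Gk_def
    by (fastforce simp: eoC_def split: if_splits)
  thus ?thesis unfolding I_def by auto
qed

theorem corollary5p9:
  fixes A :: "('ao, 'am) cat" and B :: "('bo, 'bm) cat" and F :: "('ao, 'am, 'bo, 'bm) lens"
  assumes "lens_epi A B F" and "lens_mono A B F"
  shows "lens_iso A B F"
proof -
  have L: "is_lens A B F" using assms by (simp add: lens_mono_def)
  note LD = lensD[OF L]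
  note CA = catD[OF LD(1)]
  note CB = catD[OF LD(2)]
  note io = mono_inj(1)[OF assms(2)]
  note im = mono_inj(2)[OF assms(2)]
  define g where "g = inv_into (cat_obj A) (get_obj F)"
  have surj: "cat_obj B \<subseteq> get_obj F ` cat_obj A" using epi_surj[OF assms(1)] by blast
  have g1: "\<And>y. y \<in> cat_obj B \<Longrightarrow> g y \<in> cat_obj A" unfolding g_def
    using surj by (meson inv_into_into subsetD)
  have g2: "\<And>y. y \<in> cat_obj B \<Longrightarrow> get_obj F (g y) = y" unfolding g_def
    using surj by (meson f_inv_into_f subsetD)
  have g3: "\<And>x. x \<in> cat_obj A \<Longrightarrow> g (get_obj F x) = x"
    using g1 g2 io LD(3) by metis
  define G where "G = \<lparr> get_obj = g, get_mor = (\<lambda>b. put F (g (cat_dom B b)) b),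
     put = (\<lambda>(y::'bo) a. get_mor F a) \<rparr>"
  have pm: "\<And>b. b \<in> cat_mor B \<Longrightarrow> put F (g (cat_dom B b)) b \<in> cat_mor A"
    using LD(9) g1 g2 CB(1) by metis
  have pd: "\<And>b. b \<in> cat_mor B \<Longrightarrow> cat_dom A (put F (g (cat_dom B b)) b) = g (cat_dom B b)"
    using LD(10) g1 g2 CB(1) by metis
  have pg: "\<And>b. b \<in> cat_mor B \<Longrightarrow> get_mor F (put F (g (cat_dom B b)) b) = b"
    using LD(11) g1 g2 CB(1) by metis
  have pc: "\<And>b. b \<in> cat_mor B \<Longrightarrow> cat_cod A (put F (g (cat_dom B b)) b) = g (cat_cod B b)"
  proof -
    fix b assume b: "b \<in> cat_mor B"
    have "get_obj F (cat_cod A (put F (g (cat_dom B b)) b)) = cat_cod B b"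
      using lens_cod_put(1)[OF L g1 b g2[symmetric]] CB(1)[OF b] by blast
    moreover have "cat_cod A (put F (g (cat_dom B b)) b) \<in> cat_obj A"
      using lens_cod_put(2)[OF L g1 b g2[symmetric]] CB(1)[OF b] by blast
    ultimately show "cat_cod A (put F (g (cat_dom B b)) b) = g (cat_cod B b)" using g3 by metis
  qed
  have af: "\<And>a. a \<in> cat_mor A \<Longrightarrow> put F (cat_dom A a) (get_mor F a) = a"
  proof -
    fix a assume a: "a \<in> cat_mor A"
    have "put F (cat_dom A a) (get_mor F a) \<in> cat_mor A"
      "get_mor F (put F (cat_dom A a) (get_mor F a)) = get_mor F a"
      using LD(9,11)[of "cat_dom A a" "get_mor F a"] LD(4,5) CA(1) a by auto
    thus "put F (cat_dom A a) (get_mor F a) = a" using im a by blast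
  qed
  have GL: "is_lens B A G"
    unfolding is_lens_def is_functor_def
  proof (intro conjI ballI impI)
    show "category B" "category A" by (rule LD(2), rule LD(1))
  next
    fix x assume "x \<in> cat_obj B" thus "get_obj G x \<in> cat_obj A" using g1 by (simp add: G_def)
  next
    fix f assume f: "f \<in> cat_mor B"
    show "get_mor G f \<in> cat_mor A" using pm f by (simp add: G_def)
    show "cat_dom A (get_mor G f) = get_obj G (cat_dom B f)" using pd f by (simp add: G_def)
    show "cat_cod A (get_mor G f) = get_obj G (cat_cod B f)" using pc f by (simp add: G_def)
  next
    fix x assume x: "x \<in> cat_obj B"
    show "get_mor G (cat_id B x) = cat_id A (get_obj G x)"
      using LD(12)[OF g1[OF x]] g2[OF x] CB(4)[OF x] by (simp add: G_def)
  next
    fix f h assume f: "f \<in> cat_mor B" and h: "h \<in> cat_mor B" and fh: "cat_cod B f = cat_dom B h"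
    have "put F (g (cat_dom B f)) (cat_comp B h f) =
      cat_comp A (put F (cat_cod A (put F (g (cat_dom B f)) f)) h) (put F (g (cat_dom B f)) f)"
      using LD(13)[OF g1[OF CB(1)[OF f]] f h] g2[OF CB(1)[OF f]] pc[OF f] fh g2 CB(2)[OF f] by metis
    thus "get_mor G (cat_comp B h f) = cat_comp A (get_mor G h) (get_mor G f)"
      using CB(7)[OF f h fh] pc[OF f] fh by (simp add: G_def)
  next
    fix x a assume x: "x \<in> cat_obj B" and a: "a \<in> cat_mor A" and ad: "cat_dom A a = get_obj G x"
    have ad': "cat_dom A a = g x" using ad by (simp add: G_def)
    show "put G x a \<in> cat_mor B" using LD(4) a by (simp add: G_def)
    show "cat_dom B (put G x a) = x" using LD(5) a ad' g2 x by (simp add: G_def)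
    show "get_mor G (put G x a) = a" using LD(5) a ad' g2 x af by (simp add: G_def) (metis af a ad')
  next
    fix x assume x: "x \<in> cat_obj B"
    show "put G x (cat_id A (get_obj G x)) = cat_id B x"
      using LD(7) g1 g2 x by (simp add: G_def)
  next
    fix x a a' assume x: "x \<in> cat_obj B" and a: "a \<in> cat_mor A" and a': "a' \<in> cat_mor A"
      and ad: "cat_dom A a = get_obj G x" and ad2: "cat_dom A a' = get_obj G (cat_cod B (put G x a))"
    have "cat_dom A a' = cat_cod A a" using ad2 LD(6)[OF a] g3 CA(2)[OF a] by (simp add: G_def)
    thus "put G x (cat_comp A a' a) = cat_comp B (put G (cat_cod B (put G x a)) a') (put G x a)"
      using LD(8)[OF a a'] by (simp add: G_def)
  qed
  have E1: "lens_eq A A (lens_comp G F) id_lens"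
    unfolding lens_eq_def lens_comp_def id_lens_def
    using g3 af LD(5) CA(1) by (auto simp: G_def)
  have E2: "lens_eq B B (lens_comp F G) id_lens"
    unfolding lens_eq_def lens_comp_def id_lens_def
    using g2 pg by (auto simp: G_def)
  show ?thesis unfolding lens_iso_def using L GL E1 E2 by blast
qed

end
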